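(* Let $d\in\mathbb N\cup\{\infty\}$ and ${\boldsymbol\gamma}\in\mathcal W_d\setminus\mathcal M_d$. Then the set $\Gamma=\{\widetilde{\boldsymbol\gamma}\in\mathcal M_d:\widetilde{\boldsymbol\gamma}\le{\boldsymbol\gamma}\}$, partially ordered by componentwise $\le$, contains a maximal element.
   Context: Write $[d]=\{1,\dots,d\}$ if $d\in\mathbb N$ and $[d]=\mathbb N$ if $d=\infty$. $\mathcal U_d$ is the set of finite subsets of $[d]$; $\mathcal W_d$ is the set of families $(\gamma_u)_{u\in\mathcal U_d}$ of non-negative reals, ordered componentwise. $(\Delta_v{\boldsymbol\gamma})_u=\sum_{w\subseteq v}(-1)^{|w|}\gamma_{u\cup w}$; $\mathcal M_d$ is the set of ${\boldsymbol\gamma}\in\mathcal W_d$ with $(\Delta_v{\boldsymbol\gamma})_u\ge0$ for all $u,v\in\mathcal U_d$ (completely monotone weights). *)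

theory Defs
  imports Main "HOL-Library.Extended_Nat"
begin

definition idx :: "enat \<Rightarrow> nat set" where
  "idx d = {n. 1 \<le> n \<and> enat n \<le> d}"

definition U :: "enat \<Rightarrow> nat set set" where
  "U d = {u. finite u \<and> u \<subseteq> idx d}"

text \<open>W_d: families of non-negative reals indexed by U_d, represented as functions
  on nat set that vanish outside U_d (canonical representative).\<close>
definition W :: "enat \<Rightarrow> (nat set \<Rightarrow> real) set" where
  "W d = {\<gamma>. (\<forall>u\<in>U d. 0 \<le> \<gamma> u) \<and> (\<forall>u. u \<notin> U d \<longrightarrow> \<gamma> u = 0)}"

definition wle :: "enat \<Rightarrow> (nat set \<Rightarrow> real) \<Rightarrow> (nat set \<Rightarrow> real) \<Rightarrow> bool" where
  "wle d \<gamma> \<gamma>' \<longleftrightarrow> (\<forall>u\<in>U d. \<gamma> u \<le> \<gamma>' u)"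

definition Delta :: "nat set \<Rightarrow> (nat set \<Rightarrow> real) \<Rightarrow> nat set \<Rightarrow> real" where
  "Delta v \<gamma> u = (\<Sum>w\<in>Pow v. (-1) ^ card w * \<gamma> (u \<union> w))"

definition M :: "enat \<Rightarrow> (nat set \<Rightarrow> real) set" where
  "M d = {\<gamma>\<in>W d. \<forall>u\<in>U d. \<forall>v\<in>U d. 0 \<le> Delta v \<gamma> u}"

end

theory Submission
  imports Defs
begin

lemma approx_chain:
  fixes C :: "(nat set \<Rightarrow> real) set" and s :: "nat set \<Rightarrow> real"
  assumes ne: "C \<noteq> {}"
    and ch: "\<And>a b. a \<in> C \<Longrightarrow> b \<in> C \<Longrightarrow> wle d a b \<or> wle d b a"
    and bdd: "\<And>u. u \<in> U d \<Longrightarrow> bdd_above ((\<lambda>c. c u) ` C)"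
    and s: "\<And>u. u \<in> U d \<Longrightarrow> s u = (SUP c\<in>C. c u)"
    and e: "e > 0"
  shows "finite F \<Longrightarrow> F \<subseteq> U d \<Longrightarrow> \<exists>c\<in>C. \<forall>u\<in>F. s u - e < c u"
proof (induction F rule: finite_induct)
  case empty
  then show ?case using ne by auto
next
  case (insert x F)
  then obtain c1 where c1: "c1 \<in> C" "\<forall>u\<in>F. s u - e < c1 u" by auto
  have xU: "x \<in> U d" using insert by auto
  have "s x - e < (SUP c\<in>C. c x)" using s[OF xU] e by simp
  then obtain c2 where c2: "c2 \<in> C" "s x - e < c2 x"
    using less_cSupD[of "(\<lambda>c. c x) ` C"] ne by auto
  show ?case
  proof (cases "wle d c1 c2")
    case True
    then have "\<forall>u\<in>F. s u - e < c2 u" using c1 insert unfolding wle_def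
      by (meson order_less_le_trans subsetD insert_subset)
    then show ?thesis using c2 by auto
  next
    case False
    then have "wle d c2 c1" using ch c1 c2 by blast
    then have "s x - e < c1 x" using c2 xU unfolding wle_def by force
    then show ?thesis using c1 by auto
  qed
qed

lemma U_union: "u \<in> U d \<Longrightarrow> v \<in> U d \<Longrightarrow> w \<subseteq> v \<Longrightarrow> u \<union> w \<in> U d"
  unfolding U_def by (auto intro: finite_subset)

lemma zero_M: "(\<lambda>_. 0) \<in> M d"
  unfolding M_def W_def Delta_def by auto

lemma po: assumes "A \<subseteq> W d" shows "partial_order_on A (relation_of (wle d) A)"
    unfolding partial_order_on_def preorder_on_def refl_on_def trans_def antisym_def relation_of_def
  apply (intro conjI)
  apply (auto simp: wle_def)
  apply (meson order_trans)
  apply (rule ext)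
  subgoal premises p for x y u
  proof (cases "u \<in> U d")
    case True then show ?thesis using p by (meson order_antisym)
  next
    case False
    have "x \<in> W d" "y \<in> W d" using p assms by auto
    then show ?thesis using False unfolding W_def by auto
  qed
  done

theorem mainTheorem18:
  fixes d :: enat and \<gamma> :: "nat set \<Rightarrow> real"
  assumes "d \<ge> 1"
    and "\<gamma> \<in> W d - M d"
  shows "\<exists>\<gamma>m \<in> {\<gamma>'\<in>M d. wle d \<gamma>' \<gamma>}.
           \<forall>\<gamma>'' \<in> {\<gamma>'\<in>M d. wle d \<gamma>' \<gamma>}. wle d \<gamma>m \<gamma>'' \<longrightarrow> \<gamma>'' = \<gamma>m"
proof (rule predicate_Zorn)
  let ?A = "{\<gamma>'\<in>M d. wle d \<gamma>' \<gamma>}"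
  have gW: "\<gamma> \<in> W d" using assms by auto
  show "partial_order_on ?A (relation_of (wle d) ?A)"
    by (rule po) (auto simp: M_def)
next
  fix C assume C: "C \<in> Chains (relation_of (wle d) {\<gamma>'\<in>M d. wle d \<gamma>' \<gamma>})"
  let ?A = "{\<gamma>'\<in>M d. wle d \<gamma>' \<gamma>}"
  have gW: "\<gamma> \<in> W d" using assms by auto
  have CA: "C \<subseteq> ?A" using Chains_relation_of[OF C] .
  have ch: "\<And>a b. a \<in> C \<Longrightarrow> b \<in> C \<Longrightarrow> wle d a b \<or> wle d b a"
    using C unfolding Chains_def relation_of_def by auto
  show "\<exists>u\<in>?A. \<forall>a\<in>C. wle d a u"
  proof (cases "C = {}")
    case True
    have "(\<lambda>_. 0) \<in> ?A" using zero_M gW unfolding wle_def W_def by auto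
    then show ?thesis using True by blast
  next
    case ne: False
    define s where "s u = (if u \<in> U d then (SUP c\<in>C. c u) else 0)" for u
    have bdd: "bdd_above ((\<lambda>c. c u) ` C)" if "u \<in> U d" for u
      using CA that unfolding bdd_above_def wle_def by auto
    have up: "c u \<le> s u" if "c \<in> C" "u \<in> U d" for c u
      using cSUP_upper[OF that(1) bdd[OF that(2)]] that s_def by auto
    have sle: "s u \<le> \<gamma> u" if "u \<in> U d" for u
      using that ne CA unfolding s_def wle_def by (auto intro!: cSUP_least)
    have snn: "0 \<le> s u" if "u \<in> U d" for u
    proof -
      obtain c where "c \<in> C" using ne by auto
      then have "0 \<le> c u" using CA that unfolding M_def W_def by auto
      then show ?thesis using up[OF \<open>c \<in> C\<close> that] by linarith
    qed
    have sW: "s \<in> W d" unfolding W_def using snn s_def by auto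
    have sD: "0 \<le> Delta v s u" if uU: "u \<in> U d" and vU: "v \<in> U d" for u v
    proof (rule ccontr)
      assume "\<not> 0 \<le> Delta v s u"
      then have neg: "Delta v s u < 0" by simp
      have fv: "finite v" using vU unfolding U_def by auto
      define N where "N = card (Pow v)"
      have Npos: "N > 0" unfolding N_def using fv by (auto simp add: card_gt_0_iff)
      define e where "e = - Delta v s u / N"
      have epos: "e > 0" unfolding e_def using neg Npos by (simp add: divide_neg_pos)
      have FU: "(\<lambda>w. u \<union> w) ` Pow v \<subseteq> U d" using U_union[OF uU vU] by auto
      obtain c where c: "c \<in> C" "\<forall>x\<in>(\<lambda>w. u \<union> w) ` Pow v. s x - e < c x"
        using approx_chain[OF ne ch bdd _ epos, where F="(\<lambda>w. u \<union> w) ` Pow v" and s=s] s_def fv FU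
        by auto
      have cD: "0 \<le> Delta v c u" using c CA uU vU unfolding M_def by auto
      have close: "\<bar>c (u \<union> w) - s (u \<union> w)\<bar> < e" if "w \<in> Pow v" for w
      proof -
        have "u \<union> w \<in> U d" using FU that by auto
        then have "c (u \<union> w) \<le> s (u \<union> w)" using up c by auto
        moreover have "s (u \<union> w) - e < c (u \<union> w)" using c that by auto
        ultimately show ?thesis by linarith
      qed
      have "Delta v c u - Delta v s u = (\<Sum>w\<in>Pow v. (-1) ^ card w * (c (u \<union> w) - s (u \<union> w)))"
        unfolding Delta_def by (simp add: sum_subtractf[symmetric] algebra_simps)
      also have "\<dots> \<le> (\<Sum>w\<in>Pow v. \<bar>c (u \<union> w) - s (u \<union> w)\<bar>)"
        by (rule sum_mono) (auto simp: abs_mult power_abs intro: abs_ge_self order_trans)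
      also have "\<dots> < (\<Sum>w\<in>Pow v. e)"
        by (rule sum_strict_mono) (use fv close in auto)
      also have "\<dots> = N * e" unfolding N_def by simp
      also have "\<dots> = - Delta v s u" unfolding e_def using Npos by simp
      finally show False using cD by linarith
    qed
    have "s \<in> ?A" using sW sD sle unfolding M_def wle_def by auto
    moreover have "\<forall>a\<in>C. wle d a s" using up unfolding wle_def by auto
    ultimately show ?thesis by blast
  qed
qed

end
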